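(* Let $\sigma^2>0$, $\theta\in\mathbb R^d\setminus\{0\}$, $\gamma>0$ and $\mathcal X\subseteq\mathbb R^d$. For $x\in\mathcal X$ and $y\in\mathbb R$ define the $\gamma$-score of the normal linear regression model $$S_\gamma(x,y,\theta)=(2\pi\sigma^2)^{-\frac{\gamma}{2(\gamma+1)}}\exp\Big\{-\frac{\gamma}{2}\frac{(y-\theta^\top x)^2}{\sigma^2}\Big\}\frac{y-\theta^\top x}{\sigma}\,x,$$ and let $H_\theta=\{v\in\mathbb R^d:\theta^\top v=0\}$, with $d(v,H_\theta)$ the Euclidean distance from $v$ to $H_\theta$. Then for every fixed $y\in\mathbb R$, $\sup_{x\in\mathcal X}d(S_\gamma(x,y,\theta),H_\theta)<\infty$.
   Context: The model is the normal linear regression model $p(y|x,\theta,\sigma^2)=(2\pi\sigma^2)^{-1/2}\exp\{-(y-\theta^\top x)^2/(2\sigma^2)\}$ with known $\sigma^2$; $S_\gamma$ is the score of the minimum $\gamma$-divergence estimator. *)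

theory Defs
  imports "HOL-Analysis.Analysis"
begin

definition gamma_score :: "real \<Rightarrow> real \<Rightarrow> real ^ 'd \<Rightarrow> real \<Rightarrow> real ^ 'd \<Rightarrow> real ^ 'd" where
  "gamma_score sigma2 \<gamma> x y \<theta> =
     ((2 * pi * sigma2) powr (- \<gamma> / (2 * (\<gamma> + 1)))
      * exp (- (\<gamma> / 2) * (y - \<theta> \<bullet> x)\<^sup>2 / sigma2)
      * ((y - \<theta> \<bullet> x) / sqrt sigma2)) *\<^sub>R x"

definition hyperplane_orth :: "real ^ 'd \<Rightarrow> (real ^ 'd) set" where
  "hyperplane_orth \<theta> = {v. \<theta> \<bullet> v = 0}"

end

theory Submission
  imports Defs
begin

lemma key_bound:
  fixes a t y :: real
  assumes a: "a > 0"
  shows "exp (- (a * t\<^sup>2)) * (\<bar>t\<bar> * \<bar>y - t\<bar>) \<le> \<bar>y\<bar> * (1 + 1/a) + 1/a"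
proof -
  define E where "E = exp (a * t\<^sup>2)"
  have E1: "1 \<le> E" unfolding E_def using a by simp
  have E2: "1 + a * t\<^sup>2 \<le> E" unfolding E_def by (rule exp_ge_add_one_self)
  have t2: "t\<^sup>2 \<le> E / a" using E2 a E1 by (simp add: field_simps)
  have at: "\<bar>t\<bar> \<le> 1 + t\<^sup>2"
  proof -
    have "0 \<le> (\<bar>t\<bar> - 1)\<^sup>2" by simp
    hence "0 \<le> t\<^sup>2 - 2 * \<bar>t\<bar> + 1" by (simp add: power2_diff power2_abs)
    thus ?thesis by (smt (verit) zero_le_power2)
  qed
  have "\<bar>y - t\<bar> \<le> \<bar>y\<bar> + \<bar>t\<bar>" by simp
  hence "\<bar>t\<bar> * \<bar>y - t\<bar> \<le> \<bar>t\<bar> * (\<bar>y\<bar> + \<bar>t\<bar>)" by (simp add: mult_left_mono)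
  also have "\<dots> = \<bar>y\<bar> * \<bar>t\<bar> + t\<^sup>2" by (simp add: algebra_simps power2_eq_square abs_mult_self_eq)
  also have "\<dots> \<le> \<bar>y\<bar> * (1 + t\<^sup>2) + t\<^sup>2" using at by (simp add: mult_left_mono)
  also have "\<dots> \<le> \<bar>y\<bar> * (E + E/a) + E/a"
    using t2 E1 by (intro add_mono mult_left_mono) auto
  also have "\<dots> = E * (\<bar>y\<bar> * (1 + 1/a) + 1/a)" by (simp add: field_simps)
  finally have "\<bar>t\<bar> * \<bar>y - t\<bar> \<le> E * (\<bar>y\<bar> * (1 + 1/a) + 1/a)" .
  hence "exp (- (a * t\<^sup>2)) * (\<bar>t\<bar> * \<bar>y - t\<bar>) \<le> exp (- (a * t\<^sup>2)) * (E * (\<bar>y\<bar> * (1 + 1/a) + 1/a))"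
    by (intro mult_left_mono) auto
  moreover have "exp (- (a * t\<^sup>2)) * E = 1" unfolding E_def by (simp add: exp_add[symmetric])
  ultimately show ?thesis by (simp add: mult.assoc[symmetric])
qed

theorem mainTheorem6:
  fixes sigma2 \<gamma> :: real and \<theta> :: "real ^ 'd" and X :: "(real ^ 'd) set"
  assumes "sigma2 > 0" and "\<theta> \<noteq> 0" and "\<gamma> > 0"
  shows "\<forall>y::real. bdd_above
           ((\<lambda>x. infdist (gamma_score sigma2 \<gamma> x y \<theta>) (hyperplane_orth \<theta>)) ` X)"
proof
  fix y :: real
  define c where "c = (2 * pi * sigma2) powr (- \<gamma> / (2 * (\<gamma> + 1)))"
  define a where "a = \<gamma> / (2 * sigma2)"
  have a: "a > 0" using assms unfolding a_def by simp
  have c: "c \<ge> 0" unfolding c_def by simp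
  have s: "sqrt sigma2 > 0" using assms by simp
  have nt: "norm \<theta> > 0" using assms by simp
  have tt: "\<theta> \<bullet> \<theta> \<noteq> 0" using assms by simp
  define M where "M = c / sqrt sigma2 * (\<bar>y\<bar> * (1 + 1/a) + 1/a) / norm \<theta>"
  show "bdd_above ((\<lambda>x. infdist (gamma_score sigma2 \<gamma> x y \<theta>) (hyperplane_orth \<theta>)) ` X)"
  proof (rule bdd_aboveI2)
    fix x assume "x \<in> X"
    define v where "v = gamma_score sigma2 \<gamma> x y \<theta>"
    define t where "t = y - \<theta> \<bullet> x"
    define p where "p = v - ((\<theta> \<bullet> v) / (\<theta> \<bullet> \<theta>)) *\<^sub>R \<theta>"
    have pH: "p \<in> hyperplane_orth \<theta>"
      unfolding hyperplane_orth_def p_def using tt by (simp add: inner_diff_right)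
    have "infdist v (hyperplane_orth \<theta>) \<le> dist v p" by (rule infdist_le[OF pH])
    also have "dist v p = \<bar>\<theta> \<bullet> v\<bar> / norm \<theta>"
      unfolding p_def dist_norm using nt
      by (simp add: power2_norm_eq_inner[symmetric] power2_eq_square)
    also have "\<theta> \<bullet> v = c / sqrt sigma2 * (exp (- (a * t\<^sup>2)) * (t * (y - t)))"
    proof -
      have "exp (- (\<gamma> / 2) * (y - \<theta> \<bullet> x)\<^sup>2 / sigma2) = exp (- (a * t\<^sup>2))"
        unfolding a_def t_def by (simp add: field_simps)
      thus ?thesis unfolding v_def gamma_score_def c_def[symmetric] t_def
        by (simp add: field_simps)
    qed
    also have "\<bar>\<dots>\<bar> / norm \<theta> \<le> M"
    proof -
      have "\<bar>c / sqrt sigma2 * (exp (- (a * t\<^sup>2)) * (t * (y - t)))\<bar>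
          = c / sqrt sigma2 * (exp (- (a * t\<^sup>2)) * (\<bar>t\<bar> * \<bar>y - t\<bar>))"
        using c s by (simp add: abs_mult)
      also have "\<dots> \<le> c / sqrt sigma2 * (\<bar>y\<bar> * (1 + 1/a) + 1/a)"
        using key_bound[OF a] c s by (intro mult_left_mono) auto
      finally have "\<bar>c / sqrt sigma2 * (exp (- (a * t\<^sup>2)) * (t * (y - t)))\<bar>
          \<le> c / sqrt sigma2 * (\<bar>y\<bar> * (1 + 1/a) + 1/a)" .
      from divide_right_mono[OF this, of "norm \<theta>"] nt show ?thesis unfolding M_def by simp
    qed
    finally show "infdist v (hyperplane_orth \<theta>) \<le> M" .
  qed
qed

end
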